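(* In the setting described in the context, define $$Z_0=\big\|\boldsymbol{\Pi}^{\le 2N}-\boldsymbol{\Pi}^{\le 3N}B\big(I+Dg^N(\overline{\mathbf{U}})l^{-1}\big)\boldsymbol{\Pi}^{\le 2N}\big\|_2,$$ $$Z_{1,1}=\Big(\tfrac{\mathscr{l}_{22}}{\mathscr{l}_{den}}\Big)_{2N}\|V_1^N\|_1+\Big(\tfrac{\mathscr{l}_{21}}{\mathscr{l}_{den}}\Big)_{2N}\|V_2^N\|_1,\qquad Z_{1,2}=\Big(\tfrac{\mathscr{l}_{12}}{\mathscr{l}_{den}}\Big)_{2N}\|V_1^N\|_1+\Big(\tfrac{\mathscr{l}_{11}}{\mathscr{l}_{den}}\Big)_{2N}\|V_2^N\|_1,$$ where $\big(\tfrac{\mathscr{l}_{ij}}{\mathscr{l}_{den}}\big)_{2N}=\sup_{n\in\mathbb{N}_0,\,n>2N}\big|\tfrac{\mathscr{l}_{ij}(\tilde n)}{\mathscr{l}_{den}(\tilde n)}\big|$, and let $Z_1=\sqrt{Z_0^2+2Z_{1,1}^2+2Z_{1,2}^2}$. Then $$\big\|I-B\big(I+Dg^N(\overline{\mathbf{U}})l^{-1}\big)\big\|_2\le Z_1.$$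
   Context: Parameters: $\nu>0$, $\nu_1,\dots,\nu_5\in\mathbb{R}$; $\mathscr{l}(\xi)=\begin{bmatrix}\mathscr{l}_{11}(\xi)&\mathscr{l}_{12}(\xi)\\ \mathscr{l}_{21}(\xi)&\mathscr{l}_{22}(\xi)\end{bmatrix}=\begin{bmatrix}-\nu|2\pi\xi|^2+\nu_1&\nu_2\\ \nu_3&-|2\pi\xi|^2-\nu_2\end{bmatrix}$ is assumed invertible for every $\xi\in\mathbb{R}$, and $\mathscr{l}_{den}(\xi)=\det\mathscr{l}(\xi)$. Periodic setting: $d\ge1$, $\Omega_0=(-d,d)$, $|\Omega_0|=2d$, $\tilde n=n/(2d)$, $\mathbb{N}_0=\{0,1,\dots\}$, $\alpha_0=1$, $\alpha_n=2$ ($n\ge1$); $\ell^p(\mathbb{N}_0)$ has norm $\|U\|_p=(\sum_n\alpha_n|u_n|^p)^{1/p}$; $\ell^2_e=\ell^2(\mathbb{N}_0)^2$ with $\|\mathbf{U}\|_2=(\|U_1\|_2^2+\|U_2\|_2^2)^{1/2}$, and $\|\cdot\|_2$ of an operator on $\ell^2_e$ is the induced operator norm. $\gamma(u)_n=\frac1{|\Omega_0|}\int_{\Omega_0}u(x)e^{-2\pi i\tilde nx}dx$ for even $u\in L^2(\mathbb{R})$, $\gamma^\dagger(U)(x)=\mathbb{1}_{\Omega_0}(x)\sum_n\alpha_nu_n\cos(2\pi\tilde nx)$; bold versions act componentwise on pairs. $U*V=\gamma(\gamma^\dagger(U)\gamma^\dagger(V))$. $\Pi^{\le M}$ keeps coefficients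 with $n\le M$ and zeroes the others, $\Pi^{>M}=I-\Pi^{\le M}$, bold versions componentwise. $l$ acts on $\ell^2_e$ by $(l\mathbf{U})_n=\mathscr{l}(\tilde n)\mathbf{u}_n$ with $\mathbf{u}_n=((U_1)_n,(U_2)_n)$. Approximate objects: $N_0,N\in\mathbb{N}$; $\overline{\mathbf{U}}\in\ell^2_e$ with $\overline{\mathbf{U}}=\boldsymbol{\Pi}^{\le N_0}\overline{\mathbf{U}}$, $\overline{\mathbf{u}}=(\overline u_1,\overline u_2)=\boldsymbol{\gamma}^\dagger(\overline{\mathbf{U}})$. $B^N$ is a bounded operator on $\ell^2_e$ with $B^N=\boldsymbol{\Pi}^{\le N}B^N\boldsymbol{\Pi}^{\le N}$ and $B=\boldsymbol{\Pi}^{>N}+B^N$. Let $v_1=2\overline u_1\overline u_2+2\nu_4\overline u_1+\nu_5\overline u_2$, $v_2=\overline u_1^2+\nu_5\overline u_1$, $V_i^N=\Pi^{\le N}\gamma(v_i)$, $\mathbb{V}_i^N:W\mapsto V_i^N*W$, and $Dg^N(\overline{\mathbf{U}})=\begin{bmatrix}\mathbb{V}_1^N&\mathbb{V}_2^N\\-\mathbb{V}_1^N&-\mathbb{V}_2^N\end{bmatrix}$. *)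

theory Defs
  imports "HOL-Analysis.Analysis"
begin

type_synonym seq = "nat \<Rightarrow> complex"
type_synonym seqpair = "seq \<times> seq"

definition alpha :: "nat \<Rightarrow> real" where
  "alpha n = (if n = 0 then 1 else 2)"

definition l1norm :: "seq \<Rightarrow> real" where
  "l1norm U = (\<Sum>n. alpha n * cmod (U n))"

definition l2norm :: "seq \<Rightarrow> real" where
  "l2norm U = sqrt (\<Sum>n. alpha n * (cmod (U n))\<^sup>2)"

definition l2 :: "seq set" where
  "l2 = {U. summable (\<lambda>n. alpha n * (cmod (U n))\<^sup>2)}"

definition l2e :: "seqpair set" where
  "l2e = {UU. fst UU \<in> l2 \<and> snd UU \<in> l2}"

definition l2e_norm :: "seqpair \<Rightarrow> real" where
  "l2e_norm UU = sqrt ((l2norm (fst UU))\<^sup>2 + (l2norm (snd UU))\<^sup>2)"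

definition opnorm :: "(seqpair \<Rightarrow> seqpair) \<Rightarrow> real" where
  "opnorm T = Sup {l2e_norm (T UU) | UU. UU \<in> l2e \<and> l2e_norm UU \<le> 1}"

definition Pi_le :: "nat \<Rightarrow> seq \<Rightarrow> seq" where
  "Pi_le M U = (\<lambda>n. if n \<le> M then U n else 0)"

definition Pi_gt :: "nat \<Rightarrow> seq \<Rightarrow> seq" where
  "Pi_gt M U = (\<lambda>n. if n \<le> M then 0 else U n)"

definition PPi_le :: "nat \<Rightarrow> seqpair \<Rightarrow> seqpair" where
  "PPi_le M UU = (Pi_le M (fst UU), Pi_le M (snd UU))"

definition PPi_gt :: "nat \<Rightarrow> seqpair \<Rightarrow> seqpair" where
  "PPi_gt M UU = (Pi_gt M (fst UU), Pi_gt M (snd UU))"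

definition ntilde :: "real \<Rightarrow> nat \<Rightarrow> real" where
  "ntilde d n = real n / (2 * d)"

definition gamma :: "real \<Rightarrow> (real \<Rightarrow> complex) \<Rightarrow> seq" where
  "gamma d u = (\<lambda>n. complex_of_real (1 / (2 * d)) *
      integral {-d..d} (\<lambda>x. u x * exp (- 2 * complex_of_real pi * \<i> * complex_of_real (ntilde d n * x))))"

definition gamma_dag :: "real \<Rightarrow> seq \<Rightarrow> real \<Rightarrow> complex" where
  "gamma_dag d U x = (if x \<in> {-d<..<d}
      then (\<Sum>n. complex_of_real (alpha n) * U n * complex_of_real (cos (2 * pi * ntilde d n * x)))
      else 0)"

text \<open>Discrete convolution U * V = gamma (gamma_dag U * gamma_dag V), written as the
  coefficient formula (U*V)_n = sum over k in Z of u_|k| v_|n-k|.\<close>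
definition conv :: "seq \<Rightarrow> seq \<Rightarrow> seq" where
  "conv U V = (\<lambda>n. infsum (\<lambda>k::int. U (nat \<bar>k\<bar>) * V (nat \<bar>int n - k\<bar>)) UNIV)"

definition l11 :: "real \<Rightarrow> real \<Rightarrow> real \<Rightarrow> real" where
  "l11 \<nu> \<nu>1 \<xi> = - \<nu> * (2 * pi * \<bar>\<xi>\<bar>)\<^sup>2 + \<nu>1"
definition l12 :: "real \<Rightarrow> real \<Rightarrow> real" where
  "l12 \<nu>2 \<xi> = \<nu>2"
definition l21 :: "real \<Rightarrow> real \<Rightarrow> real" where
  "l21 \<nu>3 \<xi> = \<nu>3"
definition l22 :: "real \<Rightarrow> real \<Rightarrow> real" where
  "l22 \<nu>2 \<xi> = - (2 * pi * \<bar>\<xi>\<bar>)\<^sup>2 - \<nu>2"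
definition lden :: "real \<Rightarrow> real \<Rightarrow> real \<Rightarrow> real \<Rightarrow> real \<Rightarrow> real" where
  "lden \<nu> \<nu>1 \<nu>2 \<nu>3 \<xi> = l11 \<nu> \<nu>1 \<xi> * l22 \<nu>2 \<xi> - l12 \<nu>2 \<xi> * l21 \<nu>3 \<xi>"

text \<open>Action of l^{-1} on l2e: (l^{-1} U)_n = l(ntilde n)^{-1} u_n, with the 2x2 inverse
  written via the adjugate.\<close>
definition linv :: "real \<Rightarrow> real \<Rightarrow> real \<Rightarrow> real \<Rightarrow> real \<Rightarrow> seqpair \<Rightarrow> seqpair" where
  "linv d \<nu> \<nu>1 \<nu>2 \<nu>3 UU =
     ((\<lambda>n. let \<xi> = ntilde d n; D = lden \<nu> \<nu>1 \<nu>2 \<nu>3 \<xi> in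
             complex_of_real (l22 \<nu>2 \<xi> / D) * fst UU n - complex_of_real (l12 \<nu>2 \<xi> / D) * snd UU n),
      (\<lambda>n. let \<xi> = ntilde d n; D = lden \<nu> \<nu>1 \<nu>2 \<nu>3 \<xi> in
             - complex_of_real (l21 \<nu>3 \<xi> / D) * fst UU n + complex_of_real (l11 \<nu> \<nu>1 \<xi> / D) * snd UU n))"

definition supgt :: "real \<Rightarrow> nat \<Rightarrow> (real \<Rightarrow> real) \<Rightarrow> real" where
  "supgt d M f = Sup {\<bar>f (ntilde d n)\<bar> | n. n > M}"

definition padd :: "seqpair \<Rightarrow> seqpair \<Rightarrow> seqpair" where
  "padd UU VV = ((\<lambda>n. fst UU n + fst VV n), (\<lambda>n. snd UU n + snd VV n))"
definition pdiff :: "seqpair \<Rightarrow> seqpair \<Rightarrow> seqpair" where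
  "pdiff UU VV = ((\<lambda>n. fst UU n - fst VV n), (\<lambda>n. snd UU n - snd VV n))"

definition psmult :: "complex \<Rightarrow> seqpair \<Rightarrow> seqpair" where
  "psmult c UU = ((\<lambda>n. c * fst UU n), (\<lambda>n. c * snd UU n))"

definition DgN :: "seq \<Rightarrow> seq \<Rightarrow> seqpair \<Rightarrow> seqpair" where
  "DgN V1 V2 WW = ((\<lambda>n. conv V1 (fst WW) n + conv V2 (snd WW) n),
                   (\<lambda>n. - conv V1 (fst WW) n - conv V2 (snd WW) n))"

definition Bop :: "nat \<Rightarrow> (seqpair \<Rightarrow> seqpair) \<Rightarrow> seqpair \<Rightarrow> seqpair" where
  "Bop N BN UU = padd (PPi_gt N UU) (BN UU)"

definition vfun1 :: "real \<Rightarrow> real \<Rightarrow> real \<Rightarrow> seqpair \<Rightarrow> real \<Rightarrow> complex" where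
  "vfun1 d \<nu>4 \<nu>5 Ubar x =
     (let u1 = gamma_dag d (fst Ubar) x; u2 = gamma_dag d (snd Ubar) x in
      2 * u1 * u2 + 2 * complex_of_real \<nu>4 * u1 + complex_of_real \<nu>5 * u2)"

definition vfun2 :: "real \<Rightarrow> real \<Rightarrow> seqpair \<Rightarrow> real \<Rightarrow> complex" where
  "vfun2 d \<nu>5 Ubar x =
     (let u1 = gamma_dag d (fst Ubar) x in u1\<^sup>2 + complex_of_real \<nu>5 * u1)"

definition VN1 :: "real \<Rightarrow> nat \<Rightarrow> real \<Rightarrow> real \<Rightarrow> seqpair \<Rightarrow> seq" where
  "VN1 d N \<nu>4 \<nu>5 Ubar = Pi_le N (gamma d (vfun1 d \<nu>4 \<nu>5 Ubar))"

definition VN2 :: "real \<Rightarrow> nat \<Rightarrow> real \<Rightarrow> seqpair \<Rightarrow> seq" where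
  "VN2 d N \<nu>5 Ubar = Pi_le N (gamma d (vfun2 d \<nu>5 Ubar))"

definition Aop :: "real \<Rightarrow> real \<Rightarrow> real \<Rightarrow> real \<Rightarrow> real \<Rightarrow> seq \<Rightarrow> seq \<Rightarrow> seqpair \<Rightarrow> seqpair" where
  "Aop d \<nu> \<nu>1 \<nu>2 \<nu>3 V1 V2 UU = padd UU (DgN V1 V2 (linv d \<nu> \<nu>1 \<nu>2 \<nu>3 UU))"

end

theory Submission
  imports Defs
begin

lemma alpha_ge1: "alpha n \<ge> 1" by (simp add: alpha_def)
lemma alpha_pos: "alpha n > 0" by (simp add: alpha_def)

definition pn :: "nat \<Rightarrow> seq \<Rightarrow> real" where
  "pn M U = L2_set (\<lambda>n. sqrt (alpha n) * cmod (U n)) {..<M}"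

lemma pn_sq: "(pn M U)\<^sup>2 = (\<Sum>n<M. alpha n * (cmod (U n))\<^sup>2)"
proof -
  have "(\<Sum>n<M. (sqrt (alpha n) * cmod (U n))\<^sup>2) = (\<Sum>n<M. alpha n * (cmod (U n))\<^sup>2)"
    by (intro sum.cong) (auto simp: power_mult_distrib less_imp_le[OF alpha_pos])
  moreover have "0 \<le> (\<Sum>n<M. alpha n * (cmod (U n))\<^sup>2)"
    by (intro sum_nonneg) (simp add: less_imp_le[OF alpha_pos])
  ultimately show ?thesis unfolding pn_def L2_set_def by simp
qed

lemma pn_nonneg: "pn M U \<ge> 0" unfolding pn_def by simp

lemma l2_summable: "U \<in> l2 \<Longrightarrow> summable (\<lambda>n. alpha n * (cmod (U n))\<^sup>2)"
  by (simp add: l2_def)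

lemma l2_terms_nonneg: "0 \<le> alpha n * (cmod (U n))\<^sup>2"
  by (simp add: less_imp_le[OF alpha_pos])


lemma l2norm_sq: "U \<in> l2 \<Longrightarrow> (l2norm U)\<^sup>2 = (\<Sum>n. alpha n * (cmod (U n))\<^sup>2)"
proof -
  assume a: "U \<in> l2"
  have "0 \<le> (\<Sum>n. alpha n * (cmod (U n))\<^sup>2)"
    by (rule suminf_nonneg[OF l2_summable[OF a]]) (rule l2_terms_nonneg)
  then show ?thesis unfolding l2norm_def by simp
qed

lemma l2norm_nonneg: "U \<in> l2 \<Longrightarrow> l2norm U \<ge> 0"
  using l2norm_sq[of U] unfolding l2norm_def by simp

lemma pn_le_l2: assumes "U \<in> l2" shows "pn M U \<le> l2norm U"
proof -
  have "(\<Sum>n<M. alpha n * (cmod (U n))\<^sup>2) \<le> (\<Sum>n. alpha n * (cmod (U n))\<^sup>2)"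
    by (intro sum_le_suminf l2_summable assms) (auto simp: l2_terms_nonneg)
  then have "(pn M U)\<^sup>2 \<le> (l2norm U)\<^sup>2" using pn_sq l2norm_sq assms by simp
  then show ?thesis using pn_nonneg l2norm_nonneg[OF assms] by (meson power2_le_imp_le)
qed

lemma trunc:
  assumes "\<And>M. pn M U \<le> K"
  shows "U \<in> l2 \<and> l2norm U \<le> K"
proof -
  have K0: "K \<ge> 0" using assms[of 0] pn_nonneg[of 0 U] by linarith
  have b: "(\<Sum>n<M. alpha n * (cmod (U n))\<^sup>2) \<le> K\<^sup>2" for M
    using pn_sq[of M U] assms[of M] pn_nonneg[of M U] by (metis power_mono)
  have s: "summable (\<lambda>n. alpha n * (cmod (U n))\<^sup>2)"
    by (rule summableI_nonneg_bounded[where x="K\<^sup>2"]) (auto simp: l2_terms_nonneg b)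
  have "(\<Sum>n. alpha n * (cmod (U n))\<^sup>2) \<le> K\<^sup>2" by (rule suminf_le_const[OF s b])
  then have "l2norm U \<le> sqrt (K\<^sup>2)" unfolding l2norm_def by (rule real_sqrt_le_mono)
  with K0 s show ?thesis by (simp add: l2_def)
qed

lemma pn_mono: assumes "\<And>n. n < M \<Longrightarrow> cmod (V n) \<le> K * cmod (U n)" "K \<ge> 0"
  shows "pn M V \<le> K * pn M U"
  unfolding pn_def
  apply (subst L2_set_right_distrib[OF assms(2)])
  apply (rule L2_set_mono)
  subgoal for i
    using mult_left_mono[OF assms(1)[of i], of "sqrt (alpha i)"] less_imp_le[OF alpha_pos, of i] by (simp add: mult.left_commute)
  by (simp add: less_imp_le[OF alpha_pos])

lemma pn_add: "pn M (\<lambda>n. U n + V n) \<le> pn M U + pn M V"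
proof -
  have "pn M (\<lambda>n. U n + V n) \<le> L2_set (\<lambda>n. sqrt (alpha n) * cmod (U n) + sqrt (alpha n) * cmod (V n)) {..<M}"
    unfolding pn_def
    by (rule L2_set_mono) (auto simp: norm_triangle_ineq distrib_left[symmetric] mult_left_mono less_imp_le[OF alpha_pos])
  also have "\<dots> \<le> pn M U + pn M V" unfolding pn_def by (rule L2_set_triangle_ineq)
  finally show ?thesis .
qed

lemma pn_minus: "pn M (\<lambda>n. - U n) = pn M U" unfolding pn_def by simp

lemma pn_diff: "pn M (\<lambda>n. U n - V n) \<le> pn M U + pn M V"
  using pn_add[of M U "\<lambda>n. - V n"] pn_minus[of M V] by simp

lemma l2_add: assumes "U \<in> l2" "V \<in> l2"
  shows "(\<lambda>n. U n + V n) \<in> l2 \<and> l2norm (\<lambda>n. U n + V n) \<le> l2norm U + l2norm V"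
proof (rule trunc)
  fix M show "pn M (\<lambda>n. U n + V n) \<le> l2norm U + l2norm V"
    using pn_add[of M U V] pn_le_l2[OF assms(1), of M] pn_le_l2[OF assms(2), of M] by linarith
qed

lemma l2_diff: assumes "U \<in> l2" "V \<in> l2"
  shows "(\<lambda>n. U n - V n) \<in> l2 \<and> l2norm (\<lambda>n. U n - V n) \<le> l2norm U + l2norm V"
proof (rule trunc)
  fix M show "pn M (\<lambda>n. U n - V n) \<le> l2norm U + l2norm V"
    using pn_diff[of M U V] pn_le_l2[OF assms(1), of M] pn_le_l2[OF assms(2), of M] by linarith
qed

lemma l2_minus: assumes "U \<in> l2"
  shows "(\<lambda>n. - U n) \<in> l2 \<and> l2norm (\<lambda>n. - U n) = l2norm U"
  using assms by (simp add: l2_def l2norm_def)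

lemma l2_mono: assumes "U \<in> l2" "\<And>n. cmod (V n) \<le> K * cmod (U n)" "K \<ge> 0"
  shows "V \<in> l2 \<and> l2norm V \<le> K * l2norm U"
proof (rule trunc)
  fix M show "pn M V \<le> K * l2norm U"
    using pn_mono[of M V K U] assms mult_left_mono[OF pn_le_l2[OF assms(1), of M] assms(3)] by force
qed

lemma l2_zero: "(\<lambda>n. 0) \<in> l2 \<and> l2norm (\<lambda>n. 0) = 0"
  by (simp add: l2_def l2norm_def)

lemma l2_smult: assumes "U \<in> l2"
  shows "(\<lambda>n. c * U n) \<in> l2 \<and> l2norm (\<lambda>n. c * U n) = cmod c * l2norm U"
proof -
  have s: "summable (\<lambda>n. alpha n * (cmod (U n))\<^sup>2)" using assms l2_summable by blast
  have e: "(\<lambda>n. alpha n * (cmod (c * U n))\<^sup>2) = (\<lambda>n. (cmod c)\<^sup>2 * (alpha n * (cmod (U n))\<^sup>2))"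
    by (auto simp: norm_mult power_mult_distrib)
  have s2: "summable (\<lambda>n. alpha n * (cmod (c * U n))\<^sup>2)" unfolding e by (intro summable_mult s)
  have "l2norm (\<lambda>n. c * U n) = sqrt ((cmod c)\<^sup>2 * (\<Sum>n. alpha n * (cmod (U n))\<^sup>2))"
    unfolding l2norm_def e by (simp add: suminf_mult s)
  also have "\<dots> = cmod c * l2norm U" unfolding l2norm_def by (simp add: real_sqrt_mult)
  finally show ?thesis using s2 by (simp add: l2_def)
qed

lemma mink2: "sqrt ((a1+b1)\<^sup>2 + (a2+b2)\<^sup>2) \<le> sqrt (a1\<^sup>2 + a2\<^sup>2) + sqrt (b1\<^sup>2 + b2\<^sup>2)"
proof -
  define f where "f = (\<lambda>i::nat. if i = 0 then a1 else a2)"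
  define g where "g = (\<lambda>i::nat. if i = 0 then b1 else b2)"
  have "L2_set (\<lambda>i. f i + g i) {0,1} \<le> L2_set f {0,1} + L2_set g {0,1}"
    by (rule L2_set_triangle_ineq)
  then show ?thesis by (simp add: f_def g_def)
qed

lemma sqrt2_mono: "0 \<le> x1 \<Longrightarrow> x1 \<le> y1 \<Longrightarrow> 0 \<le> x2 \<Longrightarrow> x2 \<le> y2 \<Longrightarrow> sqrt (x1\<^sup>2 + x2\<^sup>2) \<le> sqrt (y1\<^sup>2 + y2\<^sup>2)"
  by (simp add: add_mono power_mono)

lemma l2e_I: "fst P \<in> l2 \<Longrightarrow> snd P \<in> l2 \<Longrightarrow> P \<in> l2e" by (simp add: l2e_def)
lemma l2e_D: "P \<in> l2e \<Longrightarrow> fst P \<in> l2" "P \<in> l2e \<Longrightarrow> snd P \<in> l2" by (simp_all add: l2e_def)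

lemma l2e_norm_ge: "l2norm (fst P) \<le> l2e_norm P" "l2norm (snd P) \<le> l2e_norm P"
  unfolding l2e_norm_def by (auto intro: real_le_rsqrt)

lemma l2e_norm_le: "P \<in> l2e \<Longrightarrow> l2e_norm P \<le> l2norm (fst P) + l2norm (snd P)"
  unfolding l2e_norm_def
  using mink2[of "l2norm (fst P)" 0 0 "l2norm (snd P)"] l2norm_nonneg[OF l2e_D(1)] l2norm_nonneg[OF l2e_D(2)]
  by simp

lemma l2e_norm_nonneg: "l2e_norm P \<ge> 0" unfolding l2e_norm_def by simp

lemma l2e_padd: assumes "P \<in> l2e" "Q \<in> l2e"
  shows "padd P Q \<in> l2e \<and> l2e_norm (padd P Q) \<le> l2e_norm P + l2e_norm Q"
proof -
  note a = l2_add[OF l2e_D(1)[OF assms(1)] l2e_D(1)[OF assms(2)]]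
  note b = l2_add[OF l2e_D(2)[OF assms(1)] l2e_D(2)[OF assms(2)]]
  have "l2e_norm (padd P Q) \<le> sqrt ((l2norm (fst P) + l2norm (fst Q))\<^sup>2 + (l2norm (snd P) + l2norm (snd Q))\<^sup>2)"
    unfolding l2e_norm_def padd_def using a b
    by (intro sqrt2_mono) (auto intro!: l2norm_nonneg)
  also have "\<dots> \<le> l2e_norm P + l2e_norm Q" unfolding l2e_norm_def by (rule mink2)
  finally show ?thesis using a b by (simp add: l2e_def padd_def)
qed

lemma l2e_pdiff: assumes "P \<in> l2e" "Q \<in> l2e"
  shows "pdiff P Q \<in> l2e \<and> l2e_norm (pdiff P Q) \<le> l2e_norm P + l2e_norm Q"
proof -
  note a = l2_diff[OF l2e_D(1)[OF assms(1)] l2e_D(1)[OF assms(2)]]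
  note b = l2_diff[OF l2e_D(2)[OF assms(1)] l2e_D(2)[OF assms(2)]]
  have "l2e_norm (pdiff P Q) \<le> sqrt ((l2norm (fst P) + l2norm (fst Q))\<^sup>2 + (l2norm (snd P) + l2norm (snd Q))\<^sup>2)"
    unfolding l2e_norm_def pdiff_def using a b
    by (intro sqrt2_mono) (auto intro!: l2norm_nonneg)
  also have "\<dots> \<le> l2e_norm P + l2e_norm Q" unfolding l2e_norm_def by (rule mink2)
  finally show ?thesis using a b by (simp add: l2e_def pdiff_def)
qed

lemma l2e_smult: assumes "P \<in> l2e"
  shows "psmult c P \<in> l2e \<and> l2e_norm (psmult c P) = cmod c * l2e_norm P"
proof -
  note a = l2_smult[OF l2e_D(1)[OF assms], of c]
  note b = l2_smult[OF l2e_D(2)[OF assms], of c]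
  have "l2e_norm (psmult c P) = sqrt ((cmod c)\<^sup>2 * ((l2norm (fst P))\<^sup>2 + (l2norm (snd P))\<^sup>2))"
    unfolding l2e_norm_def psmult_def using a b by (simp add: power_mult_distrib algebra_simps)
  also have "\<dots> = cmod c * l2e_norm P" unfolding l2e_norm_def by (simp add: real_sqrt_mult)
  finally show ?thesis using a b by (simp add: l2e_def psmult_def)
qed

lemma l2e_proj: assumes "P \<in> l2e"
  shows "PPi_le M P \<in> l2e \<and> l2e_norm (PPi_le M P) \<le> l2e_norm P"
        "PPi_gt M P \<in> l2e \<and> l2e_norm (PPi_gt M P) \<le> l2e_norm P"
proof -
  have a: "Pi_le M U \<in> l2 \<and> l2norm (Pi_le M U) \<le> 1 * l2norm U" if "U \<in> l2" for U
    by (rule l2_mono[OF that]) (auto simp: Pi_le_def)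
  have b: "Pi_gt M U \<in> l2 \<and> l2norm (Pi_gt M U) \<le> 1 * l2norm U" if "U \<in> l2" for U
    by (rule l2_mono[OF that]) (auto simp: Pi_gt_def)
  show "PPi_le M P \<in> l2e \<and> l2e_norm (PPi_le M P) \<le> l2e_norm P"
    using a[OF l2e_D(1)[OF assms]] a[OF l2e_D(2)[OF assms]]
    unfolding PPi_le_def l2e_norm_def l2e_def
    by (auto intro!: add_mono power_mono l2norm_nonneg)
  show "PPi_gt M P \<in> l2e \<and> l2e_norm (PPi_gt M P) \<le> l2e_norm P"
    using b[OF l2e_D(1)[OF assms]] b[OF l2e_D(2)[OF assms]]
    unfolding PPi_gt_def l2e_norm_def l2e_def
    by (auto intro!: add_mono power_mono l2norm_nonneg)
qed

lemma trunc2: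
  assumes "\<And>M. sqrt ((pn M U)\<^sup>2 + (pn M V)\<^sup>2) \<le> K"
  shows "(U, V) \<in> l2e \<and> l2e_norm (U, V) \<le> K"
proof -
  have "pn M U \<le> K" for M
  proof -
    have "pn M U = sqrt ((pn M U)\<^sup>2)" using pn_nonneg[of M U] by simp
    also have "\<dots> \<le> sqrt ((pn M U)\<^sup>2 + (pn M V)\<^sup>2)" by (intro real_sqrt_le_mono) simp
    finally show ?thesis using assms[of M] by linarith
  qed
  then have u: "U \<in> l2" using trunc by blast
  have "pn M V \<le> K" for M
  proof -
    have "pn M V = sqrt ((pn M V)\<^sup>2)" using pn_nonneg[of M V] by simp
    also have "\<dots> \<le> sqrt ((pn M U)\<^sup>2 + (pn M V)\<^sup>2)" by (intro real_sqrt_le_mono) simp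
    finally show ?thesis using assms[of M] by linarith
  qed
  then have v: "V \<in> l2" using trunc by blast
  have "0 \<le> sqrt ((pn 0 U)\<^sup>2 + (pn 0 V)\<^sup>2)" by simp
  then have K0: "K \<ge> 0" using assms[of 0] by linarith
  have b: "(\<Sum>n<M. alpha n * (cmod (U n))\<^sup>2 + alpha n * (cmod (V n))\<^sup>2) \<le> K\<^sup>2" for M
  proof -
    have "(\<Sum>n<M. alpha n * (cmod (U n))\<^sup>2 + alpha n * (cmod (V n))\<^sup>2) = (pn M U)\<^sup>2 + (pn M V)\<^sup>2"
      by (simp add: pn_sq sum.distrib)
    also have "\<dots> = (sqrt ((pn M U)\<^sup>2 + (pn M V)\<^sup>2))\<^sup>2" by simp
    also have "\<dots> \<le> K\<^sup>2" using assms[of M] by (intro power_mono) auto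
    finally show ?thesis .
  qed
  have s: "summable (\<lambda>n. alpha n * (cmod (U n))\<^sup>2 + alpha n * (cmod (V n))\<^sup>2)"
    using summable_add[OF l2_summable[OF u] l2_summable[OF v]] .
  have "(\<Sum>n. alpha n * (cmod (U n))\<^sup>2 + alpha n * (cmod (V n))\<^sup>2) \<le> K\<^sup>2"
    by (rule suminf_le_const[OF s b])
  then have "(l2norm U)\<^sup>2 + (l2norm V)\<^sup>2 \<le> K\<^sup>2"
    using suminf_add[OF l2_summable[OF u] l2_summable[OF v]] l2norm_sq[OF u] l2norm_sq[OF v] by simp
  then have "l2e_norm (U, V) \<le> sqrt (K\<^sup>2)" unfolding l2e_norm_def by (simp only: fst_conv snd_conv real_sqrt_le_mono)
  then have "l2e_norm (U, V) \<le> K" using K0 by simp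
  then show ?thesis using u v by (simp add: l2e_def)
qed

lemma even_sum:
  fixes f :: "int \<Rightarrow> real"
  assumes ev: "\<And>n. f (- n) = f n"
  shows "(\<Sum>n\<in>{1 - int M..int M - 1}. f n) = (\<Sum>n<M. alpha n * f (int n))"
proof (induction M)
  case 0
  then show ?case by simp
next
  case (Suc M)
  show ?case
  proof (cases "M = 0")
    case True
    then show ?thesis by (simp add: alpha_def)
  next
    case False
    have set: "{1 - int (Suc M)..int (Suc M) - 1} = insert (- int M) (insert (int M) {1 - int M..int M - 1})"
      by auto
    have "(\<Sum>n\<in>{1 - int (Suc M)..int (Suc M) - 1}. f n) = f (- int M) + (f (int M) + (\<Sum>n\<in>{1 - int M..int M - 1}. f n))"
      unfolding set using False by (subst sum.insert; auto)+
    also have "\<dots> = alpha M * f (int M) + (\<Sum>n<M. alpha n * f (int n))"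
      using Suc.IH ev[of "int M"] False by (simp add: alpha_def)
    finally show ?thesis by simp
  qed
qed

lemma pn_int: "pn M U = L2_set (\<lambda>j. cmod (U (nat \<bar>j\<bar>))) {1 - int M..int M - 1}"
proof -
  have "(\<Sum>j\<in>{1 - int M..int M - 1}. (cmod (U (nat \<bar>j\<bar>)))\<^sup>2) = (\<Sum>n<M. alpha n * (cmod (U n))\<^sup>2)"
    by (subst even_sum) auto
  then have "L2_set (\<lambda>j. cmod (U (nat \<bar>j\<bar>))) {1 - int M..int M - 1} = sqrt ((pn M U)\<^sup>2)"
    unfolding L2_set_def pn_sq by simp
  then show ?thesis using pn_nonneg[of M U] by simp
qed

lemma l1norm_fin:
  assumes "\<forall>n>N. V n = 0"
  shows "l1norm V = (\<Sum>k\<in>{-int N..int N}. cmod (V (nat \<bar>k\<bar>)))"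
proof -
  have "l1norm V = (\<Sum>n\<in>{..<Suc N}. alpha n * cmod (V n))"
    unfolding l1norm_def using assms by (intro suminf_finite) auto
  also have "\<dots> = (\<Sum>k\<in>{1 - int (Suc N)..int (Suc N) - 1}. cmod (V (nat \<bar>k\<bar>)))"
    by (subst even_sum) auto
  also have "{1 - int (Suc N)..int (Suc N) - 1} = {-int N..int N}" by auto
  finally show ?thesis .
qed

lemma l1norm_nonneg: "\<forall>n>N. V n = 0 \<Longrightarrow> l1norm V \<ge> 0"
  by (simp add: l1norm_fin sum_nonneg)

lemma conv_fin:
  assumes "\<forall>n>N. V n = 0"
  shows "conv V W n = (\<Sum>k\<in>{-int N..int N}. V (nat \<bar>k\<bar>) * W (nat \<bar>int n - k\<bar>))"
  unfolding conv_def
  by (subst infsum_cong_neutral[where T="{-int N..int N}" and g="\<lambda>k. V (nat \<bar>k\<bar>) * W (nat \<bar>int n - k\<bar>)"])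
     (use assms in auto)

lemma conv_add: "\<forall>n>N. V n = 0 \<Longrightarrow> conv V (\<lambda>n. A n + B n) n = conv V A n + conv V B n"
  by (simp add: conv_fin distrib_left sum.distrib)

lemma conv_diff: "\<forall>n>N. V n = 0 \<Longrightarrow> conv V (\<lambda>n. A n - B n) n = conv V A n - conv V B n"
  by (simp add: conv_fin right_diff_distrib sum_subtractf)

lemma conv_smult: "\<forall>n>N. V n = 0 \<Longrightarrow> conv V (\<lambda>n. c * A n) n = c * conv V A n"
  by (simp add: conv_fin sum_distrib_left mult.left_commute)

lemma conv_low: "\<forall>n>N. V n = 0 \<Longrightarrow> (\<forall>m\<le>K. W m = 0) \<Longrightarrow> n + N \<le> K \<Longrightarrow> conv V W n = 0"
  by (simp add: conv_fin, intro sum.neutral) auto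

lemma conv_high: "\<forall>n>N. V n = 0 \<Longrightarrow> (\<forall>m>K. W m = 0) \<Longrightarrow> n > K + N \<Longrightarrow> conv V W n = 0"
  by (simp add: conv_fin, intro sum.neutral) auto

lemma L2_set_sum: "finite K \<Longrightarrow> L2_set (\<lambda>j. \<Sum>k\<in>K. g k j) A \<le> (\<Sum>k\<in>K. L2_set (g k) A)"
proof (induction K rule: finite_induct)
  case empty
  then show ?case by (simp add: L2_set_0')
next
  case (insert x F)
  have "L2_set (\<lambda>j. \<Sum>k\<in>insert x F. g k j) A = L2_set (\<lambda>j. g x j + (\<Sum>k\<in>F. g k j)) A"
    using insert by simp
  also have "\<dots> \<le> L2_set (g x) A + L2_set (\<lambda>j. \<Sum>k\<in>F. g k j) A" by (rule L2_set_triangle_ineq)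
  also have "\<dots> \<le> L2_set (g x) A + (\<Sum>k\<in>F. L2_set (g k) A)" using insert by simp
  finally show ?case using insert by simp
qed

lemma shift_le:
  fixes h :: "int \<Rightarrow> real"
  assumes "k \<in> {-int N..int N}"
  shows "L2_set (\<lambda>j. h (j - k)) {1 - int M..int M - 1} \<le> L2_set h {1 - int (M + N)..int (M + N) - 1}"
proof -
  have "(\<Sum>j\<in>{1 - int M..int M - 1}. (h (j - k))\<^sup>2) = (\<Sum>i\<in>(\<lambda>j. j - k) ` {1 - int M..int M - 1}. (h i)\<^sup>2)"
    by (subst sum.reindex) (auto simp: inj_on_def)
  also have "\<dots> \<le> (\<Sum>i\<in>{1 - int (M + N)..int (M + N) - 1}. (h i)\<^sup>2)"
    by (rule sum_mono2) (use assms in auto)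
  finally show ?thesis unfolding L2_set_def by (rule real_sqrt_le_mono)
qed

lemma young_pn:
  assumes V: "\<forall>n>N. V n = 0" and W: "W \<in> l2"
  shows "pn M (conv V W) \<le> l1norm V * l2norm W"
proof -
  define K where "K = {-int N..int N}"
  define I where "I = {1 - int M..int M - 1}"
  define c where "c = (\<lambda>j::int. \<Sum>k\<in>K. V (nat \<bar>k\<bar>) * W (nat \<bar>j - k\<bar>))"
  have ceven: "c (- j) = c j" for j
  proof -
    have "c (- j) = (\<Sum>k\<in>K. V (nat \<bar>- k\<bar>) * W (nat \<bar>- j - - k\<bar>))"
      unfolding c_def K_def
      by (rule sum.reindex_bij_witness[of _ uminus uminus]) auto
    also have "\<dots> = c j" unfolding c_def by (intro sum.cong) (auto simp: abs_minus_commute)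
    finally show ?thesis .
  qed
  have cv: "conv V W (nat \<bar>j\<bar>) = c j" for j
  proof -
    have "conv V W (nat \<bar>j\<bar>) = c \<bar>j\<bar>" unfolding c_def K_def using conv_fin[OF V] by simp
    then show ?thesis using ceven[of j] by (cases "j \<ge> 0") auto
  qed
  have "pn M (conv V W) = L2_set (\<lambda>j. cmod (c j)) I"
    unfolding pn_int I_def cv ..
  also have "\<dots> \<le> L2_set (\<lambda>j. \<Sum>k\<in>K. cmod (V (nat \<bar>k\<bar>)) * cmod (W (nat \<bar>j - k\<bar>))) I"
    unfolding c_def by (rule L2_set_mono) (auto intro: order_trans[OF norm_sum] simp: norm_mult)
  also have "\<dots> \<le> (\<Sum>k\<in>K. L2_set (\<lambda>j. cmod (V (nat \<bar>k\<bar>)) * cmod (W (nat \<bar>j - k\<bar>))) I)"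
    by (rule L2_set_sum) (simp add: K_def)
  also have "\<dots> = (\<Sum>k\<in>K. cmod (V (nat \<bar>k\<bar>)) * L2_set (\<lambda>j. cmod (W (nat \<bar>j - k\<bar>))) I)"
    by (intro sum.cong refl) (simp add: L2_set_right_distrib)
  also have "\<dots> \<le> (\<Sum>k\<in>K. cmod (V (nat \<bar>k\<bar>)) * l2norm W)"
  proof (intro sum_mono mult_left_mono)
    fix k assume k: "k \<in> K"
    have "L2_set (\<lambda>j. cmod (W (nat \<bar>j - k\<bar>))) I \<le> L2_set (\<lambda>j. cmod (W (nat \<bar>j\<bar>))) {1 - int (M + N)..int (M + N) - 1}"
      unfolding I_def using shift_le[of k N "\<lambda>j. cmod (W (nat \<bar>j\<bar>))" M] k K_def by simp
    also have "\<dots> = pn (M + N) W" by (simp add: pn_int)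
    also have "\<dots> \<le> l2norm W" by (rule pn_le_l2[OF W])
    finally show "L2_set (\<lambda>j. cmod (W (nat \<bar>j - k\<bar>))) I \<le> l2norm W" .
  qed simp
  also have "\<dots> = l1norm V * l2norm W"
    by (simp add: l1norm_fin[OF V] K_def sum_distrib_right)
  finally show ?thesis .
qed

lemma conv_l2:
  assumes V: "\<forall>n>N. V n = 0" and W: "W \<in> l2"
  shows "conv V W \<in> l2 \<and> l2norm (conv V W) \<le> l1norm V * l2norm W"
  by (rule trunc) (rule young_pn[OF V W])

lemma bnd_gen:
  fixes g :: "real \<Rightarrow> real"
  assumes "continuous_on UNIV g" "\<And>\<xi>. \<bar>\<xi>\<bar> > R \<Longrightarrow> \<bar>g \<xi>\<bar> \<le> B"
  shows "\<exists>C. \<forall>\<xi>. \<bar>g \<xi>\<bar> \<le> C"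
proof -
  have "compact (g ` cball 0 R)"
    by (rule compact_continuous_image[OF continuous_on_subset[OF assms(1)]]) auto
  then obtain C1 where C1: "\<forall>x\<in>g ` cball 0 R. norm x \<le> C1"
    using compact_imp_bounded bounded_iff by metis
  have "\<bar>g \<xi>\<bar> \<le> max C1 B" for \<xi>
  proof (cases "\<bar>\<xi>\<bar> > R")
    case True then show ?thesis using assms(2) by force
  next
    case False then have "\<xi> \<in> cball 0 R" by auto
    then show ?thesis using C1 by force
  qed
  then show ?thesis by blast
qed

lemma tail_ratio:
  fixes a b p q \<nu> t :: real
  assumes "\<nu> > 0" "t \<ge> 1" "\<nu> * t \<ge> 2 * (\<bar>p\<bar> + \<bar>q\<bar>)"
  shows "\<bar>(a * t + b) / (\<nu> * t\<^sup>2 + p * t + q)\<bar> \<le> 2 * (\<bar>a\<bar> + \<bar>b\<bar>) / \<nu>"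
proof -
  have pq: "\<bar>p * t + q\<bar> \<le> (\<bar>p\<bar> + \<bar>q\<bar>) * t"
  proof -
    have "\<bar>p * t + q\<bar> \<le> \<bar>p\<bar> * t + \<bar>q\<bar>" using assms(2) abs_triangle_ineq[of "p * t" q] by (simp add: abs_mult)
    moreover have "\<bar>q\<bar> \<le> \<bar>q\<bar> * t" using assms(2) mult_left_mono[of 1 t "\<bar>q\<bar>"] by simp
    ultimately show ?thesis by (simp add: distrib_right)
  qed
  have "(\<bar>p\<bar> + \<bar>q\<bar>) * t \<le> \<nu> * t * t / 2" using assms(2,3) by (simp add: mult_right_mono)
  then have D: "\<nu> * t\<^sup>2 + p * t + q \<ge> \<nu> * t\<^sup>2 / 2" using pq unfolding power2_eq_square by linarith
  have Dp: "\<nu> * t\<^sup>2 / 2 > 0" using assms by simp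
  have ab: "\<bar>a * t + b\<bar> \<le> (\<bar>a\<bar> + \<bar>b\<bar>) * t"
  proof -
    have "\<bar>a * t + b\<bar> \<le> \<bar>a\<bar> * t + \<bar>b\<bar>" using assms(2) abs_triangle_ineq[of "a * t" b] by (simp add: abs_mult)
    moreover have "\<bar>b\<bar> \<le> \<bar>b\<bar> * t" using assms(2) mult_left_mono[of 1 t "\<bar>b\<bar>"] by simp
    ultimately show ?thesis by (simp add: distrib_right)
  qed
  have "(\<bar>a\<bar> + \<bar>b\<bar>) * t \<le> (\<bar>a\<bar> + \<bar>b\<bar>) * t * t"
    using assms(2) mult_left_mono[of 1 t "(\<bar>a\<bar> + \<bar>b\<bar>) * t"] by simp
  also have "\<dots> = 2 * (\<bar>a\<bar> + \<bar>b\<bar>) / \<nu> * (\<nu> * t\<^sup>2 / 2)" using assms(1) by (simp add: power2_eq_square field_simps)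
  also have "\<dots> \<le> 2 * (\<bar>a\<bar> + \<bar>b\<bar>) / \<nu> * \<bar>\<nu> * t\<^sup>2 + p * t + q\<bar>"
    using D Dp assms(1) by (intro mult_left_mono) auto
  finally have "\<bar>a * t + b\<bar> \<le> 2 * (\<bar>a\<bar> + \<bar>b\<bar>) / \<nu> * \<bar>\<nu> * t\<^sup>2 + p * t + q\<bar>" using ab by linarith
  moreover have "\<bar>\<nu> * t\<^sup>2 + p * t + q\<bar> > 0" using D Dp by linarith
  ultimately show ?thesis by (simp add: abs_divide pos_divide_le_eq)
qed

lemma ratio_bnd:
  fixes a b p q \<nu> :: real
  assumes nu: "\<nu> > 0" and nz: "\<And>\<xi>. \<nu> * ((2*pi*\<bar>\<xi>\<bar>)\<^sup>2)\<^sup>2 + p * (2*pi*\<bar>\<xi>\<bar>)\<^sup>2 + q \<noteq> 0"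
  shows "\<exists>C. \<forall>\<xi>. \<bar>(a * (2*pi*\<bar>\<xi>\<bar>)\<^sup>2 + b) / (\<nu> * ((2*pi*\<bar>\<xi>\<bar>)\<^sup>2)\<^sup>2 + p * (2*pi*\<bar>\<xi>\<bar>)\<^sup>2 + q)\<bar> \<le> C"
proof (rule bnd_gen)
  show "continuous_on UNIV (\<lambda>\<xi>. (a * (2*pi*\<bar>\<xi>\<bar>)\<^sup>2 + b) / (\<nu> * ((2*pi*\<bar>\<xi>\<bar>)\<^sup>2)\<^sup>2 + p * (2*pi*\<bar>\<xi>\<bar>)\<^sup>2 + q))"
    using nz by (intro continuous_intros) auto
next
  fix \<xi> :: real
  assume R: "\<bar>\<xi>\<bar> > 2 * (\<bar>p\<bar> + \<bar>q\<bar>) / \<nu> + 1"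
  define t where "t = (2*pi*\<bar>\<xi>\<bar>)\<^sup>2"
  have x1: "\<bar>\<xi>\<bar> \<ge> 1" using R nu by (smt (verit) divide_nonneg_pos)
  have "1 * \<bar>\<xi>\<bar> \<le> (2*pi) * \<bar>\<xi>\<bar>" by (rule mult_right_mono) (use pi_gt3 in auto)
  then have "2*pi*\<bar>\<xi>\<bar> \<ge> \<bar>\<xi>\<bar>" by simp
  moreover have y1: "2*pi*\<bar>\<xi>\<bar> \<ge> 1" using calculation x1 by linarith
  moreover have "(2*pi*\<bar>\<xi>\<bar>) * 1 \<le> (2*pi*\<bar>\<xi>\<bar>) * (2*pi*\<bar>\<xi>\<bar>)"
    using y1 by (intro mult_left_mono) auto
  ultimately have tx: "t \<ge> \<bar>\<xi>\<bar>" unfolding t_def power2_eq_square by linarith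
  have t1: "t \<ge> 1" using tx x1 by linarith
  have "\<nu> * t \<ge> \<nu> * (2 * (\<bar>p\<bar> + \<bar>q\<bar>) / \<nu>)" using tx R nu by (intro mult_left_mono) auto
  then have "\<nu> * t \<ge> 2 * (\<bar>p\<bar> + \<bar>q\<bar>)" using nu by simp
  from tail_ratio[OF nu t1 this, of a b]
  show "\<bar>(a * (2*pi*\<bar>\<xi>\<bar>)\<^sup>2 + b) / (\<nu> * ((2*pi*\<bar>\<xi>\<bar>)\<^sup>2)\<^sup>2 + p * (2*pi*\<bar>\<xi>\<bar>)\<^sup>2 + q)\<bar> \<le> 2 * (\<bar>a\<bar> + \<bar>b\<bar>) / \<nu>"
    unfolding t_def .
qed

lemma lden_eq: "lden \<nu> \<nu>1 \<nu>2 \<nu>3 \<xi> = \<nu> * ((2*pi*\<bar>\<xi>\<bar>)\<^sup>2)\<^sup>2 + (\<nu>*\<nu>2 - \<nu>1) * (2*pi*\<bar>\<xi>\<bar>)\<^sup>2 + (- \<nu>1*\<nu>2 - \<nu>2*\<nu>3)"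
  unfolding lden_def l11_def l12_def l21_def l22_def by (simp add: algebra_simps power2_eq_square)

lemma coef_bound:
  assumes nu: "\<nu> > 0" and nz: "\<forall>\<xi>::real. lden \<nu> \<nu>1 \<nu>2 \<nu>3 \<xi> \<noteq> 0"
  shows "\<exists>C. \<forall>\<xi>. \<bar>l22 \<nu>2 \<xi> / lden \<nu> \<nu>1 \<nu>2 \<nu>3 \<xi>\<bar> \<le> C \<and> \<bar>l12 \<nu>2 \<xi> / lden \<nu> \<nu>1 \<nu>2 \<nu>3 \<xi>\<bar> \<le> C
     \<and> \<bar>l21 \<nu>3 \<xi> / lden \<nu> \<nu>1 \<nu>2 \<nu>3 \<xi>\<bar> \<le> C \<and> \<bar>l11 \<nu> \<nu>1 \<xi> / lden \<nu> \<nu>1 \<nu>2 \<nu>3 \<xi>\<bar> \<le> C"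
proof -
  have nz': "\<And>\<xi>. \<nu> * ((2*pi*\<bar>\<xi>\<bar>)\<^sup>2)\<^sup>2 + (\<nu>*\<nu>2 - \<nu>1) * (2*pi*\<bar>\<xi>\<bar>)\<^sup>2 + (- \<nu>1*\<nu>2 - \<nu>2*\<nu>3) \<noteq> 0"
    using nz lden_eq by metis
  note rb = ratio_bnd[OF nu nz']
  obtain C1 where C1: "\<forall>\<xi>. \<bar>((-1) * (2*pi*\<bar>\<xi>\<bar>)\<^sup>2 + (-\<nu>2)) / (\<nu> * ((2*pi*\<bar>\<xi>\<bar>)\<^sup>2)\<^sup>2 + (\<nu>*\<nu>2 - \<nu>1) * (2*pi*\<bar>\<xi>\<bar>)\<^sup>2 + (- \<nu>1*\<nu>2 - \<nu>2*\<nu>3))\<bar> \<le> C1"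
    using rb by blast
  obtain C2 where C2: "\<forall>\<xi>. \<bar>(0 * (2*pi*\<bar>\<xi>\<bar>)\<^sup>2 + \<nu>2) / (\<nu> * ((2*pi*\<bar>\<xi>\<bar>)\<^sup>2)\<^sup>2 + (\<nu>*\<nu>2 - \<nu>1) * (2*pi*\<bar>\<xi>\<bar>)\<^sup>2 + (- \<nu>1*\<nu>2 - \<nu>2*\<nu>3))\<bar> \<le> C2"
    using rb by blast
  obtain C3 where C3: "\<forall>\<xi>. \<bar>(0 * (2*pi*\<bar>\<xi>\<bar>)\<^sup>2 + \<nu>3) / (\<nu> * ((2*pi*\<bar>\<xi>\<bar>)\<^sup>2)\<^sup>2 + (\<nu>*\<nu>2 - \<nu>1) * (2*pi*\<bar>\<xi>\<bar>)\<^sup>2 + (- \<nu>1*\<nu>2 - \<nu>2*\<nu>3))\<bar> \<le> C3"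
    using rb by blast
  obtain C4 where C4: "\<forall>\<xi>. \<bar>((-\<nu>) * (2*pi*\<bar>\<xi>\<bar>)\<^sup>2 + \<nu>1) / (\<nu> * ((2*pi*\<bar>\<xi>\<bar>)\<^sup>2)\<^sup>2 + (\<nu>*\<nu>2 - \<nu>1) * (2*pi*\<bar>\<xi>\<bar>)\<^sup>2 + (- \<nu>1*\<nu>2 - \<nu>2*\<nu>3))\<bar> \<le> C4"
    using rb by blast
  define C where "C = max (max C1 C2) (max C3 C4)"
  have "C1 \<le> C" "C2 \<le> C" "C3 \<le> C" "C4 \<le> C" unfolding C_def by auto
  have "\<forall>\<xi>. \<bar>l22 \<nu>2 \<xi> / lden \<nu> \<nu>1 \<nu>2 \<nu>3 \<xi>\<bar> \<le> C \<and> \<bar>l12 \<nu>2 \<xi> / lden \<nu> \<nu>1 \<nu>2 \<nu>3 \<xi>\<bar> \<le> C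
     \<and> \<bar>l21 \<nu>3 \<xi> / lden \<nu> \<nu>1 \<nu>2 \<nu>3 \<xi>\<bar> \<le> C \<and> \<bar>l11 \<nu> \<nu>1 \<xi> / lden \<nu> \<nu>1 \<nu>2 \<nu>3 \<xi>\<bar> \<le> C"
  proof
    fix \<xi> :: real
    have e1: "l22 \<nu>2 \<xi> = (-1) * (2*pi*\<bar>\<xi>\<bar>)\<^sup>2 + (-\<nu>2)" by (simp add: l22_def)
    have e2: "l12 \<nu>2 \<xi> = 0 * (2*pi*\<bar>\<xi>\<bar>)\<^sup>2 + \<nu>2" by (simp add: l12_def)
    have e3: "l21 \<nu>3 \<xi> = 0 * (2*pi*\<bar>\<xi>\<bar>)\<^sup>2 + \<nu>3" by (simp add: l21_def)
    have e4: "l11 \<nu> \<nu>1 \<xi> = (-\<nu>) * (2*pi*\<bar>\<xi>\<bar>)\<^sup>2 + \<nu>1" by (simp add: l11_def)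
    show "\<bar>l22 \<nu>2 \<xi> / lden \<nu> \<nu>1 \<nu>2 \<nu>3 \<xi>\<bar> \<le> C \<and> \<bar>l12 \<nu>2 \<xi> / lden \<nu> \<nu>1 \<nu>2 \<nu>3 \<xi>\<bar> \<le> C
     \<and> \<bar>l21 \<nu>3 \<xi> / lden \<nu> \<nu>1 \<nu>2 \<nu>3 \<xi>\<bar> \<le> C \<and> \<bar>l11 \<nu> \<nu>1 \<xi> / lden \<nu> \<nu>1 \<nu>2 \<nu>3 \<xi>\<bar> \<le> C"
      unfolding lden_eq
      apply (subst e1, subst e2, subst e3, subst e4)
      apply (intro conjI)
      apply (rule order_trans[OF C1[rule_format, of \<xi>]], fact)
      apply (rule order_trans[OF C2[rule_format, of \<xi>]], fact)
      apply (rule order_trans[OF C3[rule_format, of \<xi>]], fact)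
      apply (rule order_trans[OF C4[rule_format, of \<xi>]], fact)
      done
  qed
  then show ?thesis by blast
qed

lemma lin_comb_l2:
  assumes U: "U \<in> l2" and V: "V \<in> l2" and Ka: "0 \<le> Ka" and Kb: "0 \<le> Kb"
    and a: "\<And>n. U n \<noteq> 0 \<Longrightarrow> cmod (a n) \<le> Ka" and b: "\<And>n. V n \<noteq> 0 \<Longrightarrow> cmod (b n) \<le> Kb"
  shows "(\<lambda>n. a n * U n + b n * V n) \<in> l2 \<and> l2norm (\<lambda>n. a n * U n + b n * V n) \<le> Ka * l2norm U + Kb * l2norm V"
proof (rule trunc)
  fix M
  have "pn M (\<lambda>n. a n * U n + b n * V n) \<le> pn M (\<lambda>n. a n * U n) + pn M (\<lambda>n. b n * V n)"
    by (rule pn_add)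
  also have "pn M (\<lambda>n. a n * U n) \<le> Ka * pn M U"
    by (rule pn_mono[OF _ Ka]) (metis a norm_mult mult_right_mono norm_ge_zero mult_zero_right norm_zero order_refl)
  also have "pn M (\<lambda>n. b n * V n) \<le> Kb * pn M V"
    by (rule pn_mono[OF _ Kb]) (metis b norm_mult mult_right_mono norm_ge_zero mult_zero_right norm_zero order_refl)
  also have "Ka * pn M U + Kb * pn M V \<le> Ka * l2norm U + Kb * l2norm V"
    by (intro add_mono mult_left_mono pn_le_l2 U V Ka Kb)
  finally show "pn M (\<lambda>n. a n * U n + b n * V n) \<le> Ka * l2norm U + Kb * l2norm V" by simp
qed

lemma linv_fst: "fst (linv d \<nu> \<nu>1 \<nu>2 \<nu>3 X) = (\<lambda>n. complex_of_real (l22 \<nu>2 (ntilde d n) / lden \<nu> \<nu>1 \<nu>2 \<nu>3 (ntilde d n)) * fst X n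
    + complex_of_real (- (l12 \<nu>2 (ntilde d n) / lden \<nu> \<nu>1 \<nu>2 \<nu>3 (ntilde d n))) * snd X n)"
  by (simp add: linv_def Let_def)

lemma linv_snd: "snd (linv d \<nu> \<nu>1 \<nu>2 \<nu>3 X) = (\<lambda>n. complex_of_real (- (l21 \<nu>3 (ntilde d n) / lden \<nu> \<nu>1 \<nu>2 \<nu>3 (ntilde d n))) * fst X n
    + complex_of_real (l11 \<nu> \<nu>1 (ntilde d n) / lden \<nu> \<nu>1 \<nu>2 \<nu>3 (ntilde d n)) * snd X n)"
  by (simp add: linv_def Let_def)

lemma linv_gen:
  assumes X: "X \<in> l2e"
    and k: "0 \<le> k22" "0 \<le> k12" "0 \<le> k21" "0 \<le> k11"
    and b1: "\<And>n. fst X n \<noteq> 0 \<Longrightarrow> \<bar>l22 \<nu>2 (ntilde d n) / lden \<nu> \<nu>1 \<nu>2 \<nu>3 (ntilde d n)\<bar> \<le> k22 \<and> \<bar>l21 \<nu>3 (ntilde d n) / lden \<nu> \<nu>1 \<nu>2 \<nu>3 (ntilde d n)\<bar> \<le> k21"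
    and b2: "\<And>n. snd X n \<noteq> 0 \<Longrightarrow> \<bar>l12 \<nu>2 (ntilde d n) / lden \<nu> \<nu>1 \<nu>2 \<nu>3 (ntilde d n)\<bar> \<le> k12 \<and> \<bar>l11 \<nu> \<nu>1 (ntilde d n) / lden \<nu> \<nu>1 \<nu>2 \<nu>3 (ntilde d n)\<bar> \<le> k11"
  shows "linv d \<nu> \<nu>1 \<nu>2 \<nu>3 X \<in> l2e"
    "l2norm (fst (linv d \<nu> \<nu>1 \<nu>2 \<nu>3 X)) \<le> k22 * l2norm (fst X) + k12 * l2norm (snd X)"
    "l2norm (snd (linv d \<nu> \<nu>1 \<nu>2 \<nu>3 X)) \<le> k21 * l2norm (fst X) + k11 * l2norm (snd X)"
proof -
  note r1 = lin_comb_l2[OF l2e_D(1)[OF X] l2e_D(2)[OF X] k(1) k(2),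
     of "\<lambda>n. complex_of_real (l22 \<nu>2 (ntilde d n) / lden \<nu> \<nu>1 \<nu>2 \<nu>3 (ntilde d n))"
        "\<lambda>n. complex_of_real (- (l12 \<nu>2 (ntilde d n) / lden \<nu> \<nu>1 \<nu>2 \<nu>3 (ntilde d n)))"]
  note r2 = lin_comb_l2[OF l2e_D(1)[OF X] l2e_D(2)[OF X] k(3) k(4),
     of "\<lambda>n. complex_of_real (- (l21 \<nu>3 (ntilde d n) / lden \<nu> \<nu>1 \<nu>2 \<nu>3 (ntilde d n)))"
        "\<lambda>n. complex_of_real (l11 \<nu> \<nu>1 (ntilde d n) / lden \<nu> \<nu>1 \<nu>2 \<nu>3 (ntilde d n))"]
  have r1': "fst (linv d \<nu> \<nu>1 \<nu>2 \<nu>3 X) \<in> l2 \<and> l2norm (fst (linv d \<nu> \<nu>1 \<nu>2 \<nu>3 X)) \<le> k22 * l2norm (fst X) + k12 * l2norm (snd X)"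
    unfolding linv_fst by (rule r1) (use b1 b2 in \<open>auto simp del: of_real_divide of_real_minus simp: norm_of_real\<close>)
  have r2': "snd (linv d \<nu> \<nu>1 \<nu>2 \<nu>3 X) \<in> l2 \<and> l2norm (snd (linv d \<nu> \<nu>1 \<nu>2 \<nu>3 X)) \<le> k21 * l2norm (fst X) + k11 * l2norm (snd X)"
    unfolding linv_snd by (rule r2) (use b1 b2 in \<open>auto simp del: of_real_divide of_real_minus simp: norm_of_real\<close>)
  show "linv d \<nu> \<nu>1 \<nu>2 \<nu>3 X \<in> l2e" using r1' r2' by (simp add: l2e_def)
  show "l2norm (fst (linv d \<nu> \<nu>1 \<nu>2 \<nu>3 X)) \<le> k22 * l2norm (fst X) + k12 * l2norm (snd X)" using r1' by simp
  show "l2norm (snd (linv d \<nu> \<nu>1 \<nu>2 \<nu>3 X)) \<le> k21 * l2norm (fst X) + k11 * l2norm (snd X)" using r2' by simp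
qed

lemma linv_add: "linv d \<nu> \<nu>1 \<nu>2 \<nu>3 (padd X Y) = padd (linv d \<nu> \<nu>1 \<nu>2 \<nu>3 X) (linv d \<nu> \<nu>1 \<nu>2 \<nu>3 Y)"
  by (rule prod_eqI) (simp_all del: of_real_divide of_real_minus add: linv_fst linv_snd padd_def algebra_simps)

lemma linv_smult: "linv d \<nu> \<nu>1 \<nu>2 \<nu>3 (psmult c X) = psmult c (linv d \<nu> \<nu>1 \<nu>2 \<nu>3 X)"
  by (rule prod_eqI) (simp_all del: of_real_divide of_real_minus add: linv_fst linv_snd psmult_def algebra_simps)

context
  fixes V1 V2 :: seq and N :: nat
  assumes V1: "\<forall>n>N. V1 n = 0" and V2: "\<forall>n>N. V2 n = 0"
begin

lemma DgN_add: "DgN V1 V2 (padd X Y) = padd (DgN V1 V2 X) (DgN V1 V2 Y)"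
  by (simp add: DgN_def padd_def conv_add[OF V1] conv_add[OF V2] algebra_simps)

lemma DgN_smult: "DgN V1 V2 (psmult c X) = psmult c (DgN V1 V2 X)"
  by (simp add: DgN_def psmult_def conv_smult[OF V1] conv_smult[OF V2] algebra_simps)

lemma Aop_add: "Aop d \<nu> \<nu>1 \<nu>2 \<nu>3 V1 V2 (padd X Y) = padd (Aop d \<nu> \<nu>1 \<nu>2 \<nu>3 V1 V2 X) (Aop d \<nu> \<nu>1 \<nu>2 \<nu>3 V1 V2 Y)"
  by (simp add: Aop_def linv_add DgN_add) (simp add: padd_def algebra_simps)

lemma Aop_smult: "Aop d \<nu> \<nu>1 \<nu>2 \<nu>3 V1 V2 (psmult c X) = psmult c (Aop d \<nu> \<nu>1 \<nu>2 \<nu>3 V1 V2 X)"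
  by (simp add: Aop_def linv_smult DgN_smult) (simp add: padd_def psmult_def algebra_simps)

lemma DgN_bound:
  assumes W: "W \<in> l2e"
  shows "DgN V1 V2 W \<in> l2e"
    "l2e_norm (DgN V1 V2 W) \<le> sqrt 2 * (l1norm V1 * l2norm (fst W) + l1norm V2 * l2norm (snd W))"
proof -
  define c where "c = (\<lambda>n. conv V1 (fst W) n + conv V2 (snd W) n)"
  note a1 = conv_l2[OF V1 l2e_D(1)[OF W]]
  note a2 = conv_l2[OF V2 l2e_D(2)[OF W]]
  note s = l2_add[OF conjunct1[OF a1] conjunct1[OF a2]]
  have c: "c \<in> l2" "l2norm c \<le> l1norm V1 * l2norm (fst W) + l1norm V2 * l2norm (snd W)"
    using s a1 a2 unfolding c_def by auto
  have D: "DgN V1 V2 W = (c, \<lambda>n. - c n)" unfolding DgN_def c_def by (simp add: algebra_simps)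
  show "DgN V1 V2 W \<in> l2e" unfolding D using c l2_minus[OF c(1)] by (simp add: l2e_def)
  have "l2e_norm (DgN V1 V2 W) = sqrt 2 * l2norm c"
    unfolding D l2e_norm_def using l2_minus[OF c(1)] l2norm_nonneg[OF c(1)]
    by (simp add: real_sqrt_mult)
  also have "\<dots> \<le> sqrt 2 * (l1norm V1 * l2norm (fst W) + l1norm V2 * l2norm (snd W))"
    using c(2) by simp
  finally show "l2e_norm (DgN V1 V2 W) \<le> sqrt 2 * (l1norm V1 * l2norm (fst W) + l1norm V2 * l2norm (snd W))" .
qed

lemma Aop_bound:
  assumes X: "X \<in> l2e" and C: "\<forall>\<xi>. \<bar>l22 \<nu>2 \<xi> / lden \<nu> \<nu>1 \<nu>2 \<nu>3 \<xi>\<bar> \<le> C \<and> \<bar>l12 \<nu>2 \<xi> / lden \<nu> \<nu>1 \<nu>2 \<nu>3 \<xi>\<bar> \<le> C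
     \<and> \<bar>l21 \<nu>3 \<xi> / lden \<nu> \<nu>1 \<nu>2 \<nu>3 \<xi>\<bar> \<le> C \<and> \<bar>l11 \<nu> \<nu>1 \<xi> / lden \<nu> \<nu>1 \<nu>2 \<nu>3 \<xi>\<bar> \<le> C"
  shows "Aop d \<nu> \<nu>1 \<nu>2 \<nu>3 V1 V2 X \<in> l2e"
    "l2e_norm (Aop d \<nu> \<nu>1 \<nu>2 \<nu>3 V1 V2 X) \<le> (1 + sqrt 2 * (l1norm V1 + l1norm V2) * (2 * C)) * l2e_norm X"
proof -
  have C0: "0 \<le> C" using C by (meson abs_ge_zero order_trans)
  have L': "linv d \<nu> \<nu>1 \<nu>2 \<nu>3 X \<in> l2e"
    "l2norm (fst (linv d \<nu> \<nu>1 \<nu>2 \<nu>3 X)) \<le> C * l2norm (fst X) + C * l2norm (snd X)"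
    "l2norm (snd (linv d \<nu> \<nu>1 \<nu>2 \<nu>3 X)) \<le> C * l2norm (fst X) + C * l2norm (snd X)"
    by (rule linv_gen[OF X C0 C0 C0 C0]; use C in auto)+
  note D = DgN_bound[OF L'(1)]
  note P = l2e_padd[OF X D(1)]
  show "Aop d \<nu> \<nu>1 \<nu>2 \<nu>3 V1 V2 X \<in> l2e" using P by (simp add: Aop_def)
  have n1: "C * l2norm (fst X) + C * l2norm (snd X) \<le> 2 * C * l2e_norm X"
    using mult_left_mono[OF l2e_norm_ge(1)[of X] C0] mult_left_mono[OF l2e_norm_ge(2)[of X] C0] by linarith
  have l1: "0 \<le> l1norm V1" "0 \<le> l1norm V2" using l1norm_nonneg V1 V2 by auto
  have "l1norm V1 * l2norm (fst (linv d \<nu> \<nu>1 \<nu>2 \<nu>3 X)) + l1norm V2 * l2norm (snd (linv d \<nu> \<nu>1 \<nu>2 \<nu>3 X))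
        \<le> l1norm V1 * (2 * C * l2e_norm X) + l1norm V2 * (2 * C * l2e_norm X)"
    using L'(2,3) n1 l1 by (intro add_mono mult_left_mono) auto
  then have "sqrt 2 * (l1norm V1 * l2norm (fst (linv d \<nu> \<nu>1 \<nu>2 \<nu>3 X)) + l1norm V2 * l2norm (snd (linv d \<nu> \<nu>1 \<nu>2 \<nu>3 X)))
        \<le> sqrt 2 * (l1norm V1 * (2 * C * l2e_norm X) + l1norm V2 * (2 * C * l2e_norm X))"
    by (intro mult_left_mono) auto
  then have "l2e_norm (DgN V1 V2 (linv d \<nu> \<nu>1 \<nu>2 \<nu>3 X)) \<le> sqrt 2 * (l1norm V1 + l1norm V2) * (2 * C) * l2e_norm X"
    using D(2) by (simp add: algebra_simps)
  then show "l2e_norm (Aop d \<nu> \<nu>1 \<nu>2 \<nu>3 V1 V2 X) \<le> (1 + sqrt 2 * (l1norm V1 + l1norm V2) * (2 * C)) * l2e_norm X"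
    using P by (simp add: Aop_def algebra_simps)
qed

end

lemma split_sq: assumes "U \<in> l2"
  shows "(l2norm (Pi_le M U))\<^sup>2 + (l2norm (Pi_gt M U))\<^sup>2 = (l2norm U)\<^sup>2"
proof -
  have a: "Pi_le M U \<in> l2" by (rule conjunct1[OF l2_mono[OF assms, of _ 1]]) (auto simp: Pi_le_def)
  have b: "Pi_gt M U \<in> l2" by (rule conjunct1[OF l2_mono[OF assms, of _ 1]]) (auto simp: Pi_gt_def)
  have e: "(\<lambda>n. alpha n * (cmod (U n))\<^sup>2) = (\<lambda>n. alpha n * (cmod (Pi_le M U n))\<^sup>2 + alpha n * (cmod (Pi_gt M U n))\<^sup>2)"
    by (auto simp: Pi_le_def Pi_gt_def)
  show ?thesis
    unfolding l2norm_sq[OF a] l2norm_sq[OF b] l2norm_sq[OF assms] e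
    by (rule suminf_add[OF l2_summable[OF a] l2_summable[OF b]])
qed

lemma cs3: fixes a b c x y z :: real
  shows "a*x + b*y + c*z \<le> sqrt (a\<^sup>2+b\<^sup>2+c\<^sup>2) * sqrt (x\<^sup>2+y\<^sup>2+z\<^sup>2)"
proof -
  have id: "(a\<^sup>2+b\<^sup>2+c\<^sup>2) * (x\<^sup>2+y\<^sup>2+z\<^sup>2) - (a*x + b*y + c*z)\<^sup>2 = (a*y-b*x)\<^sup>2+(a*z-c*x)\<^sup>2+(b*z-c*y)\<^sup>2"
    by (simp add: power2_eq_square algebra_simps)
  have "(a*x + b*y + c*z)\<^sup>2 \<le> (a\<^sup>2+b\<^sup>2+c\<^sup>2) * (x\<^sup>2+y\<^sup>2+z\<^sup>2)"
    using id by (smt (verit) zero_le_power2)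
  then have "sqrt ((a*x + b*y + c*z)\<^sup>2) \<le> sqrt ((a\<^sup>2+b\<^sup>2+c\<^sup>2) * (x\<^sup>2+y\<^sup>2+z\<^sup>2))"
    by (rule real_sqrt_le_mono)
  then show ?thesis by (simp add: real_sqrt_mult)
qed

lemma proj_smult: "PPi_le M (psmult c X) = psmult c (PPi_le M X)" "PPi_gt M (psmult c X) = psmult c (PPi_gt M X)"
  "padd (psmult c X) (psmult c Y) = psmult c (padd X Y)" "pdiff (psmult c X) (psmult c Y) = psmult c (pdiff X Y)"
  by (auto simp: PPi_le_def PPi_gt_def Pi_le_def Pi_gt_def psmult_def padd_def pdiff_def algebra_simps)

lemma comp_eq:
  fixes u h t dd ah bh :: seq and N n :: nat
  assumes "u n = h n + t n" "n \<le> 2*N \<Longrightarrow> t n = 0" "n > 2*N \<Longrightarrow> h n = 0" "n \<le> N \<Longrightarrow> dd n = 0"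
    "n > 3*N \<Longrightarrow> ah n = 0" "n > N \<Longrightarrow> bh n = 0"
  shows "u n - (Pi_gt N (\<lambda>n. ah n + (t n + dd n)) n + bh n) = (h n - Pi_le (3*N) (\<lambda>n. Pi_gt N ah n + bh n) n) - dd n"
  using assms by (cases "n \<le> N"; cases "n \<le> 3*N") (auto simp: Pi_gt_def Pi_le_def)

theorem lemma4p5:
  fixes \<nu> \<nu>1 \<nu>2 \<nu>3 \<nu>4 \<nu>5 d :: real
    and N0 N :: nat
    and Ubar :: seqpair
    and BN :: "seqpair \<Rightarrow> seqpair"
  assumes nu_pos: "\<nu> > 0"
    and l_inv: "\<forall>\<xi>::real. lden \<nu> \<nu>1 \<nu>2 \<nu>3 \<xi> \<noteq> 0"
    and d_ge: "d \<ge> 1"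
    and Ubar_l2: "Ubar \<in> l2e"
    and Ubar_proj: "Ubar = PPi_le N0 Ubar"
    and BN_maps: "\<forall>UU\<in>l2e. BN UU \<in> l2e"
    and BN_add: "\<forall>UU\<in>l2e. \<forall>VV\<in>l2e. BN (padd UU VV) = padd (BN UU) (BN VV)"
    and BN_smult: "\<forall>c. \<forall>UU\<in>l2e. BN (psmult c UU) = psmult c (BN UU)"
    and BN_bdd: "\<exists>C. \<forall>UU\<in>l2e. l2e_norm (BN UU) \<le> C * l2e_norm UU"
    and BN_proj: "\<forall>UU\<in>l2e. BN UU = PPi_le N (BN (PPi_le N UU))"
  defines "Z0 \<equiv> opnorm (\<lambda>UU. pdiff (PPi_le (2*N) UU)
                (PPi_le (3*N) (Bop N BN (Aop d \<nu> \<nu>1 \<nu>2 \<nu>3 (VN1 d N \<nu>4 \<nu>5 Ubar) (VN2 d N \<nu>5 Ubar)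
                   (PPi_le (2*N) UU)))))"
    and "Z11 \<equiv> supgt d (2*N) (\<lambda>\<xi>. l22 \<nu>2 \<xi> / lden \<nu> \<nu>1 \<nu>2 \<nu>3 \<xi>) * l1norm (VN1 d N \<nu>4 \<nu>5 Ubar)
             + supgt d (2*N) (\<lambda>\<xi>. l21 \<nu>3 \<xi> / lden \<nu> \<nu>1 \<nu>2 \<nu>3 \<xi>) * l1norm (VN2 d N \<nu>5 Ubar)"
    and "Z12 \<equiv> supgt d (2*N) (\<lambda>\<xi>. l12 \<nu>2 \<xi> / lden \<nu> \<nu>1 \<nu>2 \<nu>3 \<xi>) * l1norm (VN1 d N \<nu>4 \<nu>5 Ubar)
             + supgt d (2*N) (\<lambda>\<xi>. l11 \<nu> \<nu>1 \<xi> / lden \<nu> \<nu>1 \<nu>2 \<nu>3 \<xi>) * l1norm (VN2 d N \<nu>5 Ubar)"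
  shows "opnorm (\<lambda>UU. pdiff UU (Bop N BN (Aop d \<nu> \<nu>1 \<nu>2 \<nu>3 (VN1 d N \<nu>4 \<nu>5 Ubar) (VN2 d N \<nu>5 Ubar) UU)))
           \<le> sqrt (Z0\<^sup>2 + 2 * Z11\<^sup>2 + 2 * Z12\<^sup>2)"
proof -
  define V1 where "V1 = VN1 d N \<nu>4 \<nu>5 Ubar"
  define V2 where "V2 = VN2 d N \<nu>5 Ubar"
  have V1s: "\<forall>n>N. V1 n = 0" by (simp add: V1_def VN1_def Pi_le_def)
  have V2s: "\<forall>n>N. V2 n = 0" by (simp add: V2_def VN2_def Pi_le_def)
  define A where "A = Aop d \<nu> \<nu>1 \<nu>2 \<nu>3 V1 V2"
  define L where "L = linv d \<nu> \<nu>1 \<nu>2 \<nu>3"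
  obtain C where C: "\<forall>\<xi>. \<bar>l22 \<nu>2 \<xi> / lden \<nu> \<nu>1 \<nu>2 \<nu>3 \<xi>\<bar> \<le> C \<and> \<bar>l12 \<nu>2 \<xi> / lden \<nu> \<nu>1 \<nu>2 \<nu>3 \<xi>\<bar> \<le> C
     \<and> \<bar>l21 \<nu>3 \<xi> / lden \<nu> \<nu>1 \<nu>2 \<nu>3 \<xi>\<bar> \<le> C \<and> \<bar>l11 \<nu> \<nu>1 \<xi> / lden \<nu> \<nu>1 \<nu>2 \<nu>3 \<xi>\<bar> \<le> C"
    using coef_bound[OF nu_pos l_inv] by blast
  have C0: "0 \<le> C" using C by (meson abs_ge_zero order_trans)
  obtain CB0 where CB0: "\<forall>UU\<in>l2e. l2e_norm (BN UU) \<le> CB0 * l2e_norm UU" using BN_bdd by blast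
  define CB where "CB = max CB0 0"
  have CB: "\<forall>UU\<in>l2e. l2e_norm (BN UU) \<le> CB * l2e_norm UU"
  proof
    fix UU assume "UU \<in> l2e"
    then have "l2e_norm (BN UU) \<le> CB0 * l2e_norm UU" using CB0 by blast
    also have "\<dots> \<le> CB * l2e_norm UU" unfolding CB_def by (intro mult_right_mono l2e_norm_nonneg) simp
    finally show "l2e_norm (BN UU) \<le> CB * l2e_norm UU" .
  qed
  have CB_0: "CB \<ge> 0" unfolding CB_def by simp
  define KA where "KA = 1 + sqrt 2 * (l1norm V1 + l1norm V2) * (2 * C)"
  have KA0: "KA \<ge> 0" unfolding KA_def using C0 l1norm_nonneg[OF V1s] l1norm_nonneg[OF V2s] by simp
  have A_l2e: "A X \<in> l2e" "l2e_norm (A X) \<le> KA * l2e_norm X" if "X \<in> l2e" for X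
    unfolding A_def KA_def using Aop_bound[OF V1s V2s that C] by auto
  define z :: seqpair where "z = ((\<lambda>n. 0), (\<lambda>n. 0))"
  have z_l2e: "z \<in> l2e" and z_norm: "l2e_norm z = 0"
    unfolding z_def l2e_def l2e_norm_def using l2_zero by auto
  have BN_z: "BN z = z"
  proof -
    have "BN (psmult 0 z) = psmult 0 (BN z)" using BN_smult z_l2e by blast
    moreover have "psmult 0 z = z" "psmult 0 (BN z) = z" by (simp_all add: psmult_def z_def)
    ultimately show ?thesis by simp
  qed
  define Z0op where "Z0op = (\<lambda>UU. pdiff (PPi_le (2*N) UU) (PPi_le (3*N) (Bop N BN (A (PPi_le (2*N) UU)))))"
  have Z0eq: "Z0 = opnorm Z0op" unfolding Z0_def Z0op_def A_def V1_def V2_def ..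
  define KZ where "KZ = 1 + (1 + CB) * KA"
  have KZ0: "KZ \<ge> 0" unfolding KZ_def using CB_0 KA0 by simp
  have Z0op_l2e: "Z0op X \<in> l2e \<and> l2e_norm (Z0op X) \<le> KZ * l2e_norm X" if X: "X \<in> l2e" for X
  proof -
    note H = l2e_proj(1)[OF X, of "2*N"]
    have Y: "A (PPi_le (2*N) X) \<in> l2e" "l2e_norm (A (PPi_le (2*N) X)) \<le> KA * l2e_norm X"
      using A_l2e[of "PPi_le (2*N) X"] H mult_left_mono[OF conjunct2[OF H] KA0] by auto
    have BY: "BN (A (PPi_le (2*N) X)) \<in> l2e" "l2e_norm (BN (A (PPi_le (2*N) X))) \<le> CB * l2e_norm (A (PPi_le (2*N) X))"
      using BN_maps CB Y(1) by auto
    note G = l2e_proj(2)[OF Y(1), of N]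
    note P = l2e_padd[OF conjunct1[OF G] BY(1)]
    have PB: "Bop N BN (A (PPi_le (2*N) X)) \<in> l2e \<and> l2e_norm (Bop N BN (A (PPi_le (2*N) X))) \<le> (1 + CB) * l2e_norm (A (PPi_le (2*N) X))"
      unfolding Bop_def using P G BY(2) by (simp add: algebra_simps)
    note Q = l2e_proj(1)[OF conjunct1[OF PB], of "3*N"]
    note R = l2e_pdiff[OF conjunct1[OF H] conjunct1[OF Q]]
    have "l2e_norm (Z0op X) \<le> l2e_norm X + (1 + CB) * (KA * l2e_norm X)"
      unfolding Z0op_def using R Q PB H Y(2) mult_left_mono[OF Y(2), of "1 + CB"] CB_0 by linarith
    then show ?thesis unfolding Z0op_def KZ_def using R by (simp add: algebra_simps)
  qed
  have Z0bdd: "bdd_above {l2e_norm (Z0op UU) |UU. UU \<in> l2e \<and> l2e_norm UU \<le> 1}"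
  proof (rule bdd_aboveI)
    fix x assume "x \<in> {l2e_norm (Z0op UU) |UU. UU \<in> l2e \<and> l2e_norm UU \<le> 1}"
    then obtain UU where "UU \<in> l2e" "l2e_norm UU \<le> 1" "x = l2e_norm (Z0op UU)" by blast
    then show "x \<le> KZ" using Z0op_l2e[of UU] mult_left_mono[of "l2e_norm UU" 1 KZ] KZ0 by auto
  qed
  have Z0op_smult: "Z0op (psmult c X) = psmult c (Z0op X)" if X: "X \<in> l2e" for X c
  proof -
    have "A (PPi_le (2*N) X) \<in> l2e" using A_l2e l2e_proj(1)[OF X] by blast
    then have "BN (psmult c (A (PPi_le (2*N) X))) = psmult c (BN (A (PPi_le (2*N) X)))" using BN_smult by blast
    then show ?thesis unfolding Z0op_def Bop_def A_def
      by (simp add: proj_smult Aop_smult[OF V1s V2s])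
  qed
  have Z0_bound: "l2e_norm (Z0op X) \<le> Z0 * l2e_norm X" if X: "X \<in> l2e" for X
  proof (cases "l2e_norm X = 0")
    case True
    then show ?thesis using Z0op_l2e[OF X] by simp
  next
    case False
    then have nX: "l2e_norm X > 0" using l2e_norm_nonneg[of X] by linarith
    define X' where "X' = psmult (complex_of_real (1 / l2e_norm X)) X"
    have X': "X' \<in> l2e" "l2e_norm X' = 1"
      unfolding X'_def using l2e_smult[OF X, of "complex_of_real (1 / l2e_norm X)"] nX by (auto simp: norm_divide)
    have "l2e_norm (Z0op X') = l2e_norm (Z0op X) / l2e_norm X"
      unfolding X'_def Z0op_smult[OF X] using l2e_smult[OF conjunct1[OF Z0op_l2e[OF X]]] nX by (simp add: norm_divide)
    moreover have "l2e_norm (Z0op X') \<le> Z0"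
      unfolding Z0eq opnorm_def by (rule cSup_upper[OF _ Z0bdd]) (rule CollectI, rule exI[of _ X'], simp add: X')
    ultimately show ?thesis using nX by (simp add: divide_le_eq)
  qed
  define s22 where "s22 = supgt d (2*N) (\<lambda>\<xi>. l22 \<nu>2 \<xi> / lden \<nu> \<nu>1 \<nu>2 \<nu>3 \<xi>)"
  define s21 where "s21 = supgt d (2*N) (\<lambda>\<xi>. l21 \<nu>3 \<xi> / lden \<nu> \<nu>1 \<nu>2 \<nu>3 \<xi>)"
  define s12 where "s12 = supgt d (2*N) (\<lambda>\<xi>. l12 \<nu>2 \<xi> / lden \<nu> \<nu>1 \<nu>2 \<nu>3 \<xi>)"
  define s11 where "s11 = supgt d (2*N) (\<lambda>\<xi>. l11 \<nu> \<nu>1 \<xi> / lden \<nu> \<nu>1 \<nu>2 \<nu>3 \<xi>)"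
  have sup_le: "\<bar>f (ntilde d n)\<bar> \<le> supgt d (2*N) f" if "n > 2*N" "\<forall>\<xi>. \<bar>f \<xi>\<bar> \<le> C" for f n
    unfolding supgt_def by (rule cSup_upper) (use that in \<open>auto intro!: bdd_aboveI\<close>)
  have sup_nn: "0 \<le> supgt d (2*N) f" if "\<forall>\<xi>. \<bar>f \<xi>\<bar> \<le> C" for f
    using sup_le[of "Suc (2*N)" f] that by (meson abs_ge_zero lessI order_trans)
  have s_le: "n > 2*N \<Longrightarrow> \<bar>l22 \<nu>2 (ntilde d n) / lden \<nu> \<nu>1 \<nu>2 \<nu>3 (ntilde d n)\<bar> \<le> s22"
     "n > 2*N \<Longrightarrow> \<bar>l21 \<nu>3 (ntilde d n) / lden \<nu> \<nu>1 \<nu>2 \<nu>3 (ntilde d n)\<bar> \<le> s21"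
     "n > 2*N \<Longrightarrow> \<bar>l12 \<nu>2 (ntilde d n) / lden \<nu> \<nu>1 \<nu>2 \<nu>3 (ntilde d n)\<bar> \<le> s12"
     "n > 2*N \<Longrightarrow> \<bar>l11 \<nu> \<nu>1 (ntilde d n) / lden \<nu> \<nu>1 \<nu>2 \<nu>3 (ntilde d n)\<bar> \<le> s11" for n
    unfolding s22_def s21_def s12_def s11_def
    by (rule sup_le[where f="\<lambda>\<xi>. _ \<xi> / lden \<nu> \<nu>1 \<nu>2 \<nu>3 \<xi>"]; use C in auto)+
  have s_nn: "0 \<le> s22" "0 \<le> s21" "0 \<le> s12" "0 \<le> s11"
    unfolding s22_def s21_def s12_def s11_def
    by (rule sup_nn[where f="\<lambda>\<xi>. _ \<xi> / lden \<nu> \<nu>1 \<nu>2 \<nu>3 \<xi>"]; use C in auto)+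
  have Z11eq: "Z11 = s22 * l1norm V1 + s21 * l1norm V2"
    unfolding Z11_def s22_def s21_def V1_def V2_def ..
  have Z12eq: "Z12 = s12 * l1norm V1 + s11 * l1norm V2"
    unfolding Z12_def s12_def s11_def V1_def V2_def ..
  have goal_eq: "opnorm (\<lambda>UU. pdiff UU (Bop N BN (Aop d \<nu> \<nu>1 \<nu>2 \<nu>3 (VN1 d N \<nu>4 \<nu>5 Ubar) (VN2 d N \<nu>5 Ubar) UU)))
     = opnorm (\<lambda>UU. pdiff UU (Bop N BN (A UU)))" unfolding A_def V1_def V2_def ..
  show ?thesis unfolding goal_eq opnorm_def
  proof (rule cSup_least)
    show "{l2e_norm (pdiff UU (Bop N BN (A UU))) |UU. UU \<in> l2e \<and> l2e_norm UU \<le> 1} \<noteq> {}"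
    proof -
      have "l2e_norm (pdiff z (Bop N BN (A z))) \<in> {l2e_norm (pdiff UU (Bop N BN (A UU))) |UU. UU \<in> l2e \<and> l2e_norm UU \<le> 1}"
        by (rule CollectI, rule exI[of _ z], simp add: z_l2e z_norm)
      then show ?thesis by blast
    qed
  next
    fix x assume "x \<in> {l2e_norm (pdiff UU (Bop N BN (A UU))) |UU. UU \<in> l2e \<and> l2e_norm UU \<le> 1}"
    then obtain UU where UU: "UU \<in> l2e" "l2e_norm UU \<le> 1" and x: "x = l2e_norm (pdiff UU (Bop N BN (A UU)))"
      by blast
    define H where "H = PPi_le (2*N) UU"
    define T where "T = PPi_gt (2*N) UU"
    have H: "H \<in> l2e" unfolding H_def using l2e_proj(1)[OF UU(1)] by blast
    have T: "T \<in> l2e" unfolding T_def using l2e_proj(2)[OF UU(1)] by blast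
    define D where "D = DgN V1 V2 (L T)"
    have LT: "L T \<in> l2e" "l2norm (fst (L T)) \<le> s22 * l2norm (fst T) + s12 * l2norm (snd T)"
      "l2norm (snd (L T)) \<le> s21 * l2norm (fst T) + s11 * l2norm (snd T)"
      unfolding L_def
      by (rule linv_gen[OF T s_nn(1) s_nn(3) s_nn(2) s_nn(4)];
          use s_le in \<open>auto simp: T_def PPi_gt_def Pi_gt_def split: if_splits\<close>)+
    have Dl: "D \<in> l2e" "l2e_norm D \<le> sqrt 2 * (l1norm V1 * l2norm (fst (L T)) + l1norm V2 * l2norm (snd (L T)))"
      unfolding D_def using DgN_bound[OF V1s V2s LT(1)] by auto
    define t1 where "t1 = l2norm (fst T)"
    define t2 where "t2 = l2norm (snd T)"
    define h where "h = l2e_norm H"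
    have "l1norm V1 * l2norm (fst (L T)) + l1norm V2 * l2norm (snd (L T))
          \<le> l1norm V1 * (s22 * t1 + s12 * t2) + l1norm V2 * (s21 * t1 + s11 * t2)"
      unfolding t1_def t2_def using LT l1norm_nonneg[OF V1s] l1norm_nonneg[OF V2s]
      by (intro add_mono mult_left_mono) auto
    also have "\<dots> = Z11 * t1 + Z12 * t2" unfolding Z11eq Z12eq by (simp add: algebra_simps)
    finally have Db: "l2e_norm D \<le> sqrt 2 * (Z11 * t1 + Z12 * t2)"
      using Dl(2) by (meson mult_left_mono order_trans real_sqrt_ge_zero zero_le_numeral)
    have HH: "PPi_le (2*N) H = H" by (simp add: H_def PPi_le_def Pi_le_def fun_eq_iff)
    have ZH: "Z0op UU = Z0op H" unfolding Z0op_def HH[unfolded H_def] H_def ..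
    have Zl: "Z0op UU \<in> l2e" "l2e_norm (Z0op UU) \<le> Z0 * h"
      unfolding ZH h_def using Z0op_l2e[OF H] Z0_bound[OF H] by auto
    have UUeq: "UU = padd H T"
      by (rule prod_eqI) (auto simp: H_def T_def padd_def PPi_le_def PPi_gt_def Pi_le_def Pi_gt_def)
    have AH: "A H \<in> l2e" using A_l2e[OF H] by blast
    have AT: "A T \<in> l2e" using A_l2e[OF T] by blast
    have A_split: "A UU = padd (A H) (A T)"
    proof -
      have "A UU = A (padd H T)" by (simp only: UUeq[symmetric])
      also have "\<dots> = padd (A H) (A T)" unfolding A_def by (rule Aop_add[OF V1s V2s])
      finally show ?thesis .
    qed
    have AT_eq: "A T = padd T D" unfolding A_def Aop_def D_def L_def ..
    have T_low: "fst T m = 0" "snd T m = 0" if "m \<le> 2*N" for m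
      using that by (simp_all add: T_def PPi_gt_def Pi_gt_def)
    have H_high: "fst H m = 0" "snd H m = 0" if "m > 2*N" for m
      using that by (simp_all add: H_def PPi_le_def Pi_le_def)
    have LT_low: "fst (L T) m = 0" "snd (L T) m = 0" if "m \<le> 2*N" for m
      using T_low[OF that] by (simp_all add: L_def linv_fst linv_snd)
    have LH_high: "fst (L H) m = 0" "snd (L H) m = 0" if "m > 2*N" for m
      using H_high[OF that] by (simp_all add: L_def linv_fst linv_snd)
    have D_low: "fst D n = 0" "snd D n = 0" if "n \<le> N" for n
    proof -
      have "conv V1 (fst (L T)) n = 0" by (rule conv_low[OF V1s, of "2*N"]) (use LT_low that in auto)
      moreover have "conv V2 (snd (L T)) n = 0" by (rule conv_low[OF V2s, of "2*N"]) (use LT_low that in auto)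
      ultimately show "fst D n = 0" "snd D n = 0" by (simp_all add: D_def DgN_def)
    qed
    have AH_high: "fst (A H) n = 0" "snd (A H) n = 0" if "n > 3*N" for n
    proof -
      have "conv V1 (fst (L H)) n = 0" by (rule conv_high[OF V1s, of "2*N"]) (use LH_high that in auto)
      moreover have "conv V2 (snd (L H)) n = 0" by (rule conv_high[OF V2s, of "2*N"]) (use LH_high that in auto)
      moreover have "fst H n = 0" "snd H n = 0" using H_high that by auto
      ultimately show "fst (A H) n = 0" "snd (A H) n = 0"
        by (simp_all add: A_def Aop_def padd_def DgN_def L_def)
    qed
    have BAT: "BN (A T) = z"
    proof -
      have "PPi_le N (A T) = z"
        using D_low T_low by (auto simp: z_def PPi_le_def Pi_le_def AT_eq padd_def)
      then have "BN (A T) = PPi_le N (BN z)" using BN_proj AT by metis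
      then show ?thesis unfolding BN_z by (simp add: z_def PPi_le_def Pi_le_def fun_eq_iff)
    qed
    have BAU: "BN (A UU) = padd (BN (A H)) z" unfolding A_split using BN_add AH AT BAT by simp
    obtain Q where Q: "BN (A H) = PPi_le N Q"
      using BN_proj AH by blast
    have BH_high: "fst (BN (A H)) n = 0" "snd (BN (A H)) n = 0" if "n > N" for n
      using that by (simp_all add: Q PPi_le_def Pi_le_def)
    have eq: "pdiff UU (Bop N BN (A UU)) = pdiff (Z0op UU) D"
    proof (rule prod_eqI; rule ext)
      fix n
      show "fst (pdiff UU (Bop N BN (A UU))) n = fst (pdiff (Z0op UU) D) n"
        unfolding ZH unfolding Z0op_def unfolding HH unfolding Bop_def unfolding BAU unfolding A_split unfolding AT_eq
        unfolding pdiff_def Bop_def padd_def PPi_le_def PPi_gt_def z_def fst_conv snd_conv add_0_right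
        by (rule comp_eq[of "fst UU" n "fst H" "fst T"]) (auto simp: UUeq padd_def T_low H_high D_low AH_high BH_high)
      show "snd (pdiff UU (Bop N BN (A UU))) n = snd (pdiff (Z0op UU) D) n"
        unfolding ZH unfolding Z0op_def unfolding HH unfolding Bop_def unfolding BAU unfolding A_split unfolding AT_eq
        unfolding pdiff_def Bop_def padd_def PPi_le_def PPi_gt_def z_def fst_conv snd_conv add_0_right
        by (rule comp_eq[of "snd UU" n "snd H" "snd T"]) (auto simp: UUeq padd_def T_low H_high D_low AH_high BH_high)
    qed
    have x_le: "x \<le> Z0 * h + sqrt 2 * (Z11 * t1 + Z12 * t2)"
      using l2e_pdiff[OF Zl(1) Dl(1)] Zl(2) Db unfolding x eq by linarith
    have UU1: "fst UU \<in> l2" and UU2: "snd UU \<in> l2" using UU(1) by (simp_all add: l2e_def)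
    have "h\<^sup>2 + t1\<^sup>2 + t2\<^sup>2 = (l2norm (Pi_le (2*N) (fst UU)))\<^sup>2 + (l2norm (Pi_gt (2*N) (fst UU)))\<^sup>2
        + ((l2norm (Pi_le (2*N) (snd UU)))\<^sup>2 + (l2norm (Pi_gt (2*N) (snd UU)))\<^sup>2)"
      unfolding h_def t1_def t2_def l2e_norm_def H_def T_def PPi_le_def PPi_gt_def
      by (simp add: algebra_simps)
    also have "\<dots> = (l2e_norm UU)\<^sup>2"
      unfolding split_sq[OF UU1] split_sq[OF UU2] l2e_norm_def by simp
    finally have hs: "h\<^sup>2 + t1\<^sup>2 + t2\<^sup>2 \<le> 1"
      using UU(2) l2e_norm_nonneg[of UU] by (simp add: power_le_one)
    have "Z0 * h + sqrt 2 * (Z11 * t1 + Z12 * t2) = Z0 * h + (sqrt 2 * Z11) * t1 + (sqrt 2 * Z12) * t2"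
      by (simp add: algebra_simps)
    also have "\<dots> \<le> sqrt (Z0\<^sup>2 + (sqrt 2 * Z11)\<^sup>2 + (sqrt 2 * Z12)\<^sup>2) * sqrt (h\<^sup>2 + t1\<^sup>2 + t2\<^sup>2)"
      by (rule cs3)
    also have "\<dots> \<le> sqrt (Z0\<^sup>2 + 2 * Z11\<^sup>2 + 2 * Z12\<^sup>2) * 1"
    proof -
      have e: "(sqrt 2 * Z11)\<^sup>2 = 2 * Z11\<^sup>2" "(sqrt 2 * Z12)\<^sup>2 = 2 * Z12\<^sup>2" by (simp_all add: power_mult_distrib)
      have "sqrt (h\<^sup>2 + t1\<^sup>2 + t2\<^sup>2) \<le> 1" using hs by simp
      then show ?thesis unfolding e by (intro mult_left_mono) auto
    qed
    finally show "x \<le> sqrt (Z0\<^sup>2 + 2 * Z11\<^sup>2 + 2 * Z12\<^sup>2)" using x_le by simp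
  qed
qed

end
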